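(* Let $B>0$, $\epsilon\in(0,2B)$ and $c=\frac{1}{2B-\epsilon}$ (so $c>\frac{1}{2B}$). Define $f(z)=\operatorname{sinc}(\epsilon z)e^{\pi i(2B-\epsilon)z}$ and $g(z)=\operatorname{sinc}(\epsilon z)e^{-\pi i(2B-\epsilon)z}$ for $z\in\mathbb{C}$. Then $f,g\in\mathrm{PW}^2_B$ (explicitly, $f(z)=\frac1\epsilon\int_{-B}^B\chi_{[B-\epsilon,B]}(\xi)e^{2\pi i\xi z}\,d\xi$ and $g(z)=\frac1\epsilon\int_{-B}^B\chi_{[-B,-B+\epsilon]}(\xi)e^{2\pi i\xi z}\,d\xi$), and for all $t\in\mathbb{R}$ we have $|f(t)|=|g(t)|$ and $f(t)\overline{f(t-c)}=g(t)\overline{g(t-c)}$, but there is no $\alpha\in\mathbb{R}$ with $f=e^{i\alpha}g$.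
   Context: $\operatorname{sinc}(z)=\frac{\sin(\pi z)}{\pi z}$ for $z\neq0$ and $\operatorname{sinc}(0)=1$. For $B>0$, the Paley--Wiener space is $\mathrm{PW}^2_B:=\{f:\mathbb{C}\to\mathbb{C} \mid \exists F\in L^2([-B,B])\ \forall z\in\mathbb{C}: f(z)=\int_{-B}^B F(\xi)e^{2\pi i \xi z}\,d\xi\}$. $\chi_I$ denotes the indicator function of the set $I$. *)

theory Defs
  imports "HOL-Analysis.Analysis"
begin

definition sinc :: "complex \<Rightarrow> complex" where
  "sinc z = (if z = 0 then 1 else sin (of_real pi * z) / (of_real pi * z))"

definition PW2 :: "real \<Rightarrow> (complex \<Rightarrow> complex) set" where
  "PW2 B = {f. \<exists>F :: real \<Rightarrow> complex.
      F \<in> borel_measurable (lebesgue_on {-B..B}) \<and>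
      integrable (lebesgue_on {-B..B}) (\<lambda>\<xi>. (norm (F \<xi>))\<^sup>2) \<and>
      (\<forall>z. f z = integral\<^sup>L (lebesgue_on {-B..B})
                    (\<lambda>\<xi>. F \<xi> * exp (2 * of_real pi * \<i> * of_real \<xi> * z)))}"

end

theory Submission imports Defs begin

lemma exp_int:
  fixes z :: complex and a b :: real
  assumes "a \<le> b" "z \<noteq> 0"
  shows "((\<lambda>\<xi>::real. exp (2 * of_real pi * \<i> * of_real \<xi> * z)) has_integral
     (exp (2 * of_real pi * \<i> * of_real b * z) - exp (2 * of_real pi * \<i> * of_real a * z)) / (2 * of_real pi * \<i> * z)) {a..b}"
proof -
  have nz: "2 * of_real pi * \<i> * z \<noteq> 0" using assms by simp
  have d: "((\<lambda>\<xi>::real. exp (2 * of_real pi * \<i> * of_real \<xi> * z) / (2 * of_real pi * \<i> * z)) has_vector_derivative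
          exp (2 * of_real pi * \<i> * of_real x * z)) (at x within {a..b})" for x
  proof -
    have "((\<lambda>w. exp (2 * of_real pi * \<i> * w * z) / (2 * of_real pi * \<i> * z)) has_field_derivative
          exp (2 * of_real pi * \<i> * of_real x * z)) (at (of_real x))"
      using nz by (auto intro!: derivative_eq_intros simp: field_simps)
    then show ?thesis by (rule has_vector_derivative_real_field)
  qed
  have "((\<lambda>\<xi>::real. exp (2 * of_real pi * \<i> * of_real \<xi> * z)) has_integral
     (exp (2 * of_real pi * \<i> * of_real b * z) / (2 * of_real pi * \<i> * z) - exp (2 * of_real pi * \<i> * of_real a * z) / (2 * of_real pi * \<i> * z))) {a..b}"
    by (rule fundamental_theorem_of_calculus[OF assms(1)]) (use d in auto)
  then show ?thesis by (simp add: diff_divide_distrib)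
qed

lemma key:
  fixes z :: complex and a b B :: real
  assumes "a \<le> b" "-B \<le> a" "b \<le> B"
  shows "integral\<^sup>L (lebesgue_on {-B..B}) (\<lambda>\<xi>. indicator {a..b} \<xi> * exp (2 * of_real pi * \<i> * of_real \<xi> * z))
     = (if z = 0 then of_real (b - a) else
       (exp (2 * of_real pi * \<i> * of_real b * z) - exp (2 * of_real pi * \<i> * of_real a * z)) / (2 * of_real pi * \<i> * z))"
proof -
  let ?h = "\<lambda>\<xi>::real. exp (2 * of_real pi * \<i> * of_real \<xi> * z)"
  have "integral\<^sup>L (lebesgue_on {-B..B}) (\<lambda>\<xi>. indicator {a..b} \<xi> * ?h \<xi>)
      = integral\<^sup>L (lebesgue_on {-B..B}) (\<lambda>\<xi>. if \<xi> \<in> {a..b} then ?h \<xi> else 0)"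
    by (rule Bochner_Integration.integral_cong) (auto simp: indicator_def)
  also have "\<dots> = integral\<^sup>L (lebesgue_on {a..b}) ?h"
    using assms by (intro integral_restrict) auto
  also have "\<dots> = integral {a..b} ?h"
  proof -
    have "integrable (lebesgue_on {a..b}) ?h"
      by (intro continuous_imp_integrable_real continuous_intros)
    then have "(?h has_integral integral\<^sup>L (lebesgue_on {a..b}) ?h) {a..b}"
      by (intro has_integral_integral_lebesgue_on) auto
    then show ?thesis by (simp add: integral_unique)
  qed
  also have "\<dots> = (if z = 0 then of_real (b - a) else
       (exp (2 * of_real pi * \<i> * of_real b * z) - exp (2 * of_real pi * \<i> * of_real a * z)) / (2 * of_real pi * \<i> * z))"
  proof (cases "z = 0")
    case True
    then show ?thesis using assms by (simp add: content_real scaleR_conv_of_real)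
  next
    case False
    then show ?thesis using exp_int[OF assms(1) False] by (simp add: integral_unique)
  qed
  finally show ?thesis .
qed

lemma sinc_real: "sinc (of_real x) = of_real (if x = 0 then 1 else sin (pi * x) / (pi * x))"
  by (simp add: sinc_def sin_of_real[symmetric])

lemma exp_split:
  fixes z :: complex and B e :: real
  shows "exp (2 * of_real pi * \<i> * of_real B * z) =
     exp (of_real pi * \<i> * of_real (2 * B - e) * z) * exp (of_real pi * \<i> * of_real e * z)"
    "exp (2 * of_real pi * \<i> * of_real (B - e) * z) =
     exp (of_real pi * \<i> * of_real (2 * B - e) * z) * exp (- (of_real pi * \<i> * of_real e * z))"
    "exp (2 * of_real pi * \<i> * of_real (-B + e) * z) =
     exp (- (of_real pi * \<i> * of_real (2 * B - e) * z)) * exp (of_real pi * \<i> * of_real e * z)"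
    "exp (2 * of_real pi * \<i> * of_real (-B) * z) =
     exp (- (of_real pi * \<i> * of_real (2 * B - e) * z)) * exp (- (of_real pi * \<i> * of_real e * z))"
  by (simp_all add: exp_add[symmetric] algebra_simps)

lemma sinc_nz:
  fixes z :: complex assumes "z \<noteq> 0"
  shows "sinc z = (exp (of_real pi * \<i> * z) - exp (- (of_real pi * \<i> * z))) / (2 * \<i> * of_real pi * z)"
  using assms by (simp add: sinc_def sin_exp_eq field_simps)

lemma sinc_nz2:
  fixes z :: complex assumes "z \<noteq> 0" "e \<noteq> 0"
  shows "sinc (of_real e * z) = (exp (of_real pi * \<i> * of_real e * z) - exp (- (of_real pi * \<i> * of_real e * z))) / (2 * \<i> * of_real pi * (of_real e * z))"
  using sinc_nz[of "of_real e * z"] assms by (simp add: mult.assoc)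

lemma alg:
  fixes z u v E :: complex assumes "z \<noteq> 0" "e \<noteq> 0"
  shows "(u - v) / (2 * \<i> * of_real pi * (of_real e * z)) * E = of_real (1 / e) * ((E * u - E * v) / (2 * of_real pi * \<i> * z))"
  using assms by (simp add: field_simps)

lemma pw:
  fixes a b B e :: real
  shows "(\<lambda>z. of_real (1 / e) * integral\<^sup>L (lebesgue_on {-B..B})
          (\<lambda>\<xi>. indicator {a..b} \<xi> * exp (2 * of_real pi * \<i> * of_real \<xi> * z))) \<in> PW2 B"
  unfolding PW2_def
proof (intro CollectI exI conjI allI)
  let ?F = "\<lambda>\<xi>::real. (of_real (1 / e) * indicator {a..b} \<xi> :: complex)"
  have [measurable]: "(\<lambda>x. x) \<in> borel_measurable (lebesgue_on {-B..B})"
    using id_borel_measurable_lebesgue_on by (simp add: id_def)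
  show m: "?F \<in> borel_measurable (lebesgue_on {-B..B})"
    by measurable
  show "integrable (lebesgue_on {-B..B}) (\<lambda>\<xi>. (norm (?F \<xi>))\<^sup>2)"
  proof (rule measurable_bounded_by_integrable_imp_lebesgue_integrable)
    show "(\<lambda>\<xi>. (norm (?F \<xi>))\<^sup>2) \<in> borel_measurable (lebesgue_on {-B..B})"
      using m by measurable
    show "integrable (lebesgue_on {-B..B}) (\<lambda>_. (1/e)^2)"
      by (intro continuous_imp_integrable_real continuous_intros)
    show "norm ((norm (?F x))\<^sup>2) \<le> (1/e)^2" for x
      by (auto simp: indicator_def power2_eq_square norm_divide)
  qed auto
  show "of_real (1 / e) * integral\<^sup>L (lebesgue_on {-B..B})
          (\<lambda>\<xi>. indicator {a..b} \<xi> * exp (2 * of_real pi * \<i> * of_real \<xi> * z)) =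
        integral\<^sup>L (lebesgue_on {-B..B}) (\<lambda>\<xi>. ?F \<xi> * exp (2 * of_real pi * \<i> * of_real \<xi> * z))" for z
    by (simp add: mult.assoc)
qed

theorem mainTheorem9:
  fixes B \<epsilon> c :: real and f g :: "complex \<Rightarrow> complex"
  assumes "B > 0" and "0 < \<epsilon>" and "\<epsilon> < 2 * B"
  defines "c \<equiv> 1 / (2 * B - \<epsilon>)"
  defines "f \<equiv> (\<lambda>z. sinc (of_real \<epsilon> * z) * exp (of_real pi * \<i> * of_real (2 * B - \<epsilon>) * z))"
  defines "g \<equiv> (\<lambda>z. sinc (of_real \<epsilon> * z) * exp (- (of_real pi * \<i> * of_real (2 * B - \<epsilon>) * z)))"
  shows "f \<in> PW2 B \<and> g \<in> PW2 B
    \<and> (\<forall>z. f z = of_real (1 / \<epsilon>) * integral\<^sup>L (lebesgue_on {-B..B})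
          (\<lambda>\<xi>. indicator {B - \<epsilon>..B} \<xi> * exp (2 * of_real pi * \<i> * of_real \<xi> * z)))
    \<and> (\<forall>z. g z = of_real (1 / \<epsilon>) * integral\<^sup>L (lebesgue_on {-B..B})
          (\<lambda>\<xi>. indicator {-B..-B + \<epsilon>} \<xi> * exp (2 * of_real pi * \<i> * of_real \<xi> * z)))
    \<and> (\<forall>t::real. norm (f (of_real t)) = norm (g (of_real t)))
    \<and> (\<forall>t::real. f (of_real t) * cnj (f (of_real (t - c))) = g (of_real t) * cnj (g (of_real (t - c))))
    \<and> \<not> (\<exists>\<alpha>::real. f = (\<lambda>z. exp (\<i> * of_real \<alpha>) * g z))"
proof -
  have ep: "\<epsilon> \<noteq> 0" using assms by simp
  have ff: "f z = of_real (1 / \<epsilon>) * integral\<^sup>L (lebesgue_on {-B..B})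
          (\<lambda>\<xi>. indicator {B - \<epsilon>..B} \<xi> * exp (2 * of_real pi * \<i> * of_real \<xi> * z))" for z
  proof (cases "z = 0")
    case True
    then show ?thesis using key[of "B - \<epsilon>" B B z] assms by (simp add: f_def sinc_def)
  next
    case False
    have "f z = of_real (1 / \<epsilon>) * ((exp (of_real pi * \<i> * of_real (2 * B - \<epsilon>) * z) * exp (of_real pi * \<i> * of_real \<epsilon> * z)
       - exp (of_real pi * \<i> * of_real (2 * B - \<epsilon>) * z) * exp (- (of_real pi * \<i> * of_real \<epsilon> * z))) / (2 * of_real pi * \<i> * z))"
      unfolding f_def sinc_nz2[OF False ep] by (rule alg[OF False ep])
    also have "\<dots> = of_real (1 / \<epsilon>) * ((exp (2 * of_real pi * \<i> * of_real B * z) - exp (2 * of_real pi * \<i> * of_real (B - \<epsilon>) * z)) / (2 * of_real pi * \<i> * z))"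
      by (simp only: exp_split(1)[where z=z and B=B and e=\<epsilon>] exp_split(2)[where z=z and B=B and e=\<epsilon>])
    finally show ?thesis using key[of "B - \<epsilon>" B B z] assms False by simp
  qed
  have gg: "g z = of_real (1 / \<epsilon>) * integral\<^sup>L (lebesgue_on {-B..B})
          (\<lambda>\<xi>. indicator {-B..-B + \<epsilon>} \<xi> * exp (2 * of_real pi * \<i> * of_real \<xi> * z))" for z
  proof (cases "z = 0")
    case True
    then show ?thesis using key[of "-B" "-B + \<epsilon>" B z] assms by (simp add: g_def sinc_def)
  next
    case False
    have "g z = of_real (1 / \<epsilon>) * ((exp (- (of_real pi * \<i> * of_real (2 * B - \<epsilon>) * z)) * exp (of_real pi * \<i> * of_real \<epsilon> * z)
       - exp (- (of_real pi * \<i> * of_real (2 * B - \<epsilon>) * z)) * exp (- (of_real pi * \<i> * of_real \<epsilon> * z))) / (2 * of_real pi * \<i> * z))"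
      unfolding g_def sinc_nz2[OF False ep] by (rule alg[OF False ep])
    also have "\<dots> = of_real (1 / \<epsilon>) * ((exp (2 * of_real pi * \<i> * of_real (-B + \<epsilon>) * z) - exp (2 * of_real pi * \<i> * of_real (-B) * z)) / (2 * of_real pi * \<i> * z))"
      by (simp only: exp_split(3)[where z=z and B=B and e=\<epsilon>] exp_split(4)[where z=z and B=B and e=\<epsilon>])
    finally show ?thesis using key[of "-B" "-B + \<epsilon>" B z] assms False by simp
  qed
  define r where "r = 2 * B - \<epsilon>"
  have rpos: "r > 0" using assms by (simp add: r_def)
  have rc: "r * c = 1" using rpos by (simp add: c_def r_def)
  define S where "S = (\<lambda>x::real. if x = 0 then 1 else sin (pi * x) / (pi * x))"
  have fr: "f (of_real y) = of_real (S (\<epsilon> * y)) * exp (\<i> * of_real (pi * r * y))" for y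
  proof -
    have 1: "of_real pi * \<i> * of_real (2 * B - \<epsilon>) * of_real y = \<i> * (of_real (pi * r * y) :: complex)"
      by (simp add: r_def)
    have 2: "(of_real \<epsilon> * of_real y :: complex) = of_real (\<epsilon> * y)" by simp
    show ?thesis unfolding f_def 1 2 sinc_real S_def by simp
  qed
  have gr: "g (of_real y) = of_real (S (\<epsilon> * y)) * exp (- (\<i> * of_real (pi * r * y)))" for y
  proof -
    have 1: "of_real pi * \<i> * of_real (2 * B - \<epsilon>) * of_real y = \<i> * (of_real (pi * r * y) :: complex)"
      by (simp add: r_def)
    have 2: "(of_real \<epsilon> * of_real y :: complex) = of_real (\<epsilon> * y)" by simp
    show ?thesis unfolding g_def 1 2 sinc_real S_def by simp
  qed
  have nrm: "norm (f (of_real t)) = norm (g (of_real t))" for t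
  proof -
    have "norm (exp (- (\<i> * of_real (pi * r * t)))) = 1"
      using norm_exp_i_times[of "- (pi * r * t)"] by simp
    then show ?thesis unfolding fr gr by (simp add: norm_mult)
  qed
  have h: "pi * r * t - pi * r * (t - c) = pi" for t
    using rc by (simp add: algebra_simps)
  have cj1: "cnj (exp (\<i> * of_real x)) = exp (- (\<i> * of_real x))" for x
    by (simp add: exp_cnj)
  have cj2: "cnj (exp (- (\<i> * of_real x))) = exp (\<i> * of_real x)" for x
    by (simp add: exp_cnj)
  have prod: "(of_real a * exp p) * cnj (of_real b * exp q) = of_real (a * b) * (exp p * cnj (exp q))" for a b :: real and p q :: complex
    by simp
  have cj: "f (of_real t) * cnj (f (of_real (t - c))) = g (of_real t) * cnj (g (of_real (t - c)))" for t
  proof -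
    have "exp (\<i> * of_real (pi * r * t)) * exp (- (\<i> * of_real (pi * r * (t - c)))) = exp (\<i> * of_real (pi * r * t - pi * r * (t - c)))"
      by (simp add: exp_add[symmetric] algebra_simps)
    also have "\<dots> = -1" unfolding h by simp
    finally have A: "exp (\<i> * of_real (pi * r * t)) * exp (- (\<i> * of_real (pi * r * (t - c)))) = -1" .
    have "exp (- (\<i> * of_real (pi * r * t))) * exp (\<i> * of_real (pi * r * (t - c))) = exp (- (\<i> * of_real (pi * r * t - pi * r * (t - c))))"
      by (simp add: exp_add[symmetric] algebra_simps)
    also have "\<dots> = -1" unfolding h by (simp add: exp_minus)
    finally have B: "exp (- (\<i> * of_real (pi * r * t))) * exp (\<i> * of_real (pi * r * (t - c))) = -1" .
    show ?thesis unfolding fr gr prod cj1 cj2 A B ..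
  qed
  have ne: "\<not> (\<exists>\<alpha>::real. f = (\<lambda>z. exp (\<i> * of_real \<alpha>) * g z))"
  proof
    assume "\<exists>\<alpha>::real. f = (\<lambda>z. exp (\<i> * of_real \<alpha>) * g z)"
    then obtain \<alpha> where fa: "\<And>z. f z = exp (\<i> * of_real \<alpha>) * g z" by metis
    have "f 0 = 1" "g 0 = 1" by (simp_all add: f_def g_def sinc_def)
    then have e1: "exp (\<i> * of_real \<alpha>) = 1" using fa[of 0] by simp
    have ar: "of_real pi * \<i> * of_real (2 * B - \<epsilon>) * \<i> = (of_real (- (pi * r)) :: complex)"
    proof -
      have "of_real pi * \<i> * of_real (2 * B - \<epsilon>) * \<i> = (\<i> * \<i>) * (of_real pi * of_real (2 * B - \<epsilon>) :: complex)"
        by algebra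
      also have "\<dots> = (\<i> * \<i>) * (of_real (pi * r) :: complex)" by (simp only: r_def of_real_mult)
      finally have "of_real pi * \<i> * of_real (2 * B - \<epsilon>) * \<i> = (\<i> * \<i>) * (of_real (pi * r) :: complex)" .
      then show ?thesis by simp
    qed
    have fi: "f \<i> = sinc (of_real \<epsilon> * \<i>) * exp (of_real (- (pi * r)))"
      unfolding f_def ar ..
    have gi: "g \<i> = sinc (of_real \<epsilon> * \<i>) * exp (of_real (pi * r))"
      unfolding g_def ar by simp
    have sn: "sinc (of_real \<epsilon> * \<i>) \<noteq> 0"
    proof -
      have sq: "sin (of_real pi * (of_real \<epsilon> * \<i>)) = \<i> * ((exp (of_real (pi * \<epsilon>)) - inverse (exp (of_real (pi * \<epsilon>)))) / 2)"
        using sin_i_times[of "of_real (pi * \<epsilon>)"] by (simp add: mult.commute mult.left_commute)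
      have "exp (pi * \<epsilon>) > 1" using assms by simp
      then have "exp (pi * \<epsilon>) \<noteq> inverse (exp (pi * \<epsilon>))"
        by (metis exp_gt_zero inverse_less_1_iff less_irrefl order.strict_trans)
      then have "exp (of_real (pi * \<epsilon>)) \<noteq> inverse (exp (of_real (pi * \<epsilon>)) :: complex)"
        by (metis exp_of_real of_real_eq_iff of_real_inverse)
      then have "sin (of_real pi * (of_real \<epsilon> * \<i>)) \<noteq> 0" unfolding sq by simp
      then show ?thesis using ep by (simp add: sinc_def)
    qed
    have "exp (of_real (- (pi * r))) = (exp (of_real (pi * r)) :: complex)"
      using fa[of \<i>] e1 fi gi sn by simp
    then have "exp (- (pi * r)) = exp (pi * r)"
      by (metis exp_of_real of_real_eq_iff)
    then show False using rpos by simp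
  qed
  have "f = (\<lambda>z. of_real (1 / \<epsilon>) * integral\<^sup>L (lebesgue_on {-B..B})
          (\<lambda>\<xi>. indicator {B - \<epsilon>..B} \<xi> * exp (2 * of_real pi * \<i> * of_real \<xi> * z)))"
    using ff by (rule ext)
  then have fp: "f \<in> PW2 B" using pw by simp
  have "g = (\<lambda>z. of_real (1 / \<epsilon>) * integral\<^sup>L (lebesgue_on {-B..B})
          (\<lambda>\<xi>. indicator {-B..-B + \<epsilon>} \<xi> * exp (2 * of_real pi * \<i> * of_real \<xi> * z)))"
    using gg by (rule ext)
  then have gp: "g \<in> PW2 B" using pw by simp
  show ?thesis
    using fp gp ff gg nrm cj ne by blast
qed

end
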